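(* For all integers $n\ge0$, $k\ge1$ and all $0\le\beta\le\alpha$, $$\sum_{i=1}^{k}F_{ni}(\alpha,\beta)=\int_\beta^\alpha\!\!\int_0^\beta\bar\lambda\sum_{i=1}^{k}F_{(n-1)i}(\eta,\sigma)\,d\sigma\,d\eta+4\int_\beta^\alpha\!\!\int_0^\beta\frac{\eta\sigma}{(\eta^2-\sigma^2)^2}F_{n(k-1)}(\eta,\sigma)\,d\sigma\,d\eta.$$
   Context: Let $\bar\lambda\ge0$. For integers $n,k\ge0$ and $0\le\beta<\alpha$, $F_{nk}(\alpha,\beta)=\frac{\bar\lambda^{n+1}\alpha^n\beta^n}{n!(n+1)!}(\alpha-\beta)\frac{\log^k\left(\frac{\alpha+\beta}{\alpha-\beta}\right)}{k!}$, extended continuously by $0$ on the diagonal $\alpha=\beta$; $F_{nk}\equiv0$ if $n<0$ or $k<0$. *)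

theory Defs
  imports "HOL-Analysis.Analysis"
begin

text \<open>Defined by the paper's formula for 0 <= beta < alpha, as 0 on the diagonal
  (continuous extension) and for negative indices; set to 0 elsewhere (convention,
  never used by the statement).\<close>
definition F :: "real \<Rightarrow> int \<Rightarrow> int \<Rightarrow> real \<Rightarrow> real \<Rightarrow> real" where
  "F lam n k a b =
     (if n < 0 \<or> k < 0 then 0
      else if 0 \<le> b \<and> b < a then
        lam ^ (nat n + 1) * a ^ nat n * b ^ nat n / (fact (nat n) * fact (nat n + 1))
        * (a - b) * (ln ((a + b) / (a - b))) ^ nat k / fact (nat k)
      else 0)"

end

theory Submission
  imports Defs
begin

definition T :: "nat \<Rightarrow> real \<Rightarrow> real" where "T m x = (\<Sum>i\<le>m. x^i / fact i)"
definition Tp :: "nat \<Rightarrow> real \<Rightarrow> real" where "Tp m x = (if m = 0 then 0 else T (m-1) x)"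

lemma T_Suc: "T (Suc m) x = T m x + x^Suc m / fact (Suc m)"
  by (simp add: T_def)

lemma T_split: "T m x = Tp m x + x^m/fact m"
  by (cases m) (auto simp: Tp_def T_Suc T_def)

lemma T_deriv: "(T m has_real_derivative Tp m x) (at x)"
proof (induction m)
  case 0
  then show ?case by (simp add: T_def Tp_def)
next
  case (Suc m)
  have d: "((\<lambda>x. x^Suc m / fact (Suc m)) has_real_derivative x^m / fact m) (at x)"
  proof -
    have "((\<lambda>x. x^Suc m / fact (Suc m)) has_real_derivative real (Suc m) * x^(Suc m - Suc 0) / fact (Suc m)) (at x)"
      by (rule DERIV_cdivide[OF DERIV_pow])
    moreover have "real (Suc m) * x^m / fact (Suc m) = x^m / fact m"
      by (simp add: fact_Suc divide_simps)
    ultimately show ?thesis by simp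
  qed
  have dd: "((\<lambda>x. T m x + x^Suc m / fact (Suc m)) has_real_derivative T m x) (at x)"
    using DERIV_add[OF Suc d] by (simp only: T_split[symmetric])
  have eq: "T (Suc m) = (\<lambda>x. T m x + x^Suc m / fact (Suc m))" by (rule ext) (rule T_Suc)
  have "Tp (Suc m) x = T m x" by (simp add: Tp_def)
  then show ?case unfolding eq using dd by simp
qed


lemma T_deriv_chain[derivative_intros]:
  "(f has_real_derivative f') (at x within s) \<Longrightarrow> ((\<lambda>x. T m (f x)) has_real_derivative Tp m (f x) * f') (at x within s)"
  using DERIV_chain2[OF T_deriv] by blast

lemma T_sum1: "(\<Sum>i=1..K. x^i / fact i) = T K x - (1::real)"
proof -
  have "T K x = (\<Sum>i\<in>insert 0 {1..K}. x^i / fact i)"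
    unfolding T_def by (rule sum.cong) auto
  then show ?thesis by simp
qed

lemma T_ge1: "(x::real) \<ge> 0 \<Longrightarrow> T K x \<ge> 1"
proof -
  assume "x \<ge> 0"
  then have "(\<Sum>i=1..K. x^i / fact i) \<ge> 0" by (intro sum_nonneg) auto
  then show ?thesis using T_sum1[of x K] by simp
qed

lemma alg:
  fixes a b U V W Lj A B pa pb n fj :: real
  assumes ab: "b < a" "0 < a + b" and V: "V = W + Lj / fj" and f: "fj \<noteq> 0"
    and rA: "n * A = n * pa * a" and rB: "n * B = n * pb * b"
  shows "(n * pb * (n * pa) * (a - b) - n * pa * B + n * pb * A) * (U - 1) +
        V * (1 / (a + b) + 1 / (a - b)) * (n * pa * B * (a - b) + A * B) +
        (((n * pb * A * (a - b) - A * B) * V +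
          W * (1 / (a + b) + 1 / (a - b)) * (A * B * (a - b))) *
         (1 / (a + b) - 1 / (a - b)) +
         (- (1 / ((a + b) * (a + b))) - 1 / ((a - b) * (a - b))) *
         (A * B * (a - b) * V)) =
        n * (1 + n) * pa * pb * (a - b) * (U - 1) +
        4 * a * b * (A * B * (a - b)) * Lj / ((a\<^sup>2 - b\<^sup>2)\<^sup>2 * fj)"
proof -
  define D1 where "D1 = 1/(a+b)"
  define D2 where "D2 = 1/(a-b)"
  have e1: "(a+b)*D1 = 1" "(a-b)*D2 = 1" using ab by (auto simp: D1_def D2_def)
  have q1: "1 / ((a + b) * (a + b)) = D1*D1" "1 / ((a - b) * (a - b)) = D2*D2" by (auto simp: D1_def D2_def)
  define Pa where "Pa = n * pa * B * (a - b) + A * B"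
  define Pb where "Pb = n * pb * A * (a - b) - A * B"
  define P where "P = A * B * (a - b)"
  define La where "La = D1 - D2"
  define Lb where "Lb = D1 + D2"
  define Lab where "Lab = - (D1*D1) - D2*D2"
  define C where "C = n * pb * (n * pa) * (a - b) - n * pa * B + n * pb * A"
  have br: "n * pa * B * (D1+D2) + n * pb * A * (D1-D2) = 0"
  proof -
    have "n * pa * B * (D1+D2) + n * pb * A * (D1-D2) = pa * (n*B) * (D1+D2) + pb * (n * A) * (D1-D2)"
      by (simp add: algebra_simps)
    also have "\<dots> = n*pa*pb * ((a+b)*D1 - (a-b)*D2)" unfolding rA rB by (simp add: algebra_simps)
    also have "\<dots> = 0" using e1 by simp
    finally show ?thesis .
  qed
  have Z1: "Pa*Lb + Pb*La = 2*A*B*D2"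
  proof -
    have "Pa*Lb + Pb*La = (a-b)*(n * pa * B * (D1+D2) + n * pb * A * (D1-D2)) + A*B*(2*D2)"
      unfolding Pa_def Pb_def La_def Lb_def by (simp add: algebra_simps)
    then show ?thesis unfolding br by simp
  qed
  have Z2: "P*(Lab + La*Lb) = - 2*A*B*D2*((a-b)*D2)"
    unfolding P_def Lab_def La_def Lb_def by (simp add: algebra_simps)
  have Z: "Pa*Lb + Pb*La + P*Lab + P*La*Lb = 0"
  proof -
    have "Pa*Lb + Pb*La + P*Lab + P*La*Lb = (Pa*Lb + Pb*La) + P*(Lab + La*Lb)" by (simp add: algebra_simps)
    also have "\<dots> = 0" using Z1 Z2 e1 by simp
    finally show ?thesis .
  qed
  have C: "C = n * (1 + n) * pa * pb * (a - b)"
  proof -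
    have "C = n*n*pa*pb*(a-b) - pa*(n*B) + pb*(n*A)" unfolding C_def by (simp add: algebra_simps)
    also have "\<dots> = n * (1 + n) * pa * pb * (a - b)" unfolding rA rB by (simp add: algebra_simps)
    finally show ?thesis .
  qed
  have LHS: "C * (U - 1) + V * Lb * Pa + (((Pb * V + W * Lb * P) * La) + Lab * (P * V))
      = C * (U - 1) + W * (Pa*Lb + Pb*La + P*Lab + P*La*Lb) + (Lj/fj) * ((Pa*Lb + Pb*La + P*Lab + P*La*Lb) - P*La*Lb)"
    unfolding V by (simp add: algebra_simps)
  have D: "D2*D2 - D1*D1 = 4*a*b/(a\<^sup>2 - b\<^sup>2)\<^sup>2"
  proof -
    have h: "a\<^sup>2 - b\<^sup>2 = (a+b)*(a-b)" by (simp add: algebra_simps power2_eq_square)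
    have ne: "a + b \<noteq> 0" "a - b \<noteq> 0" using ab by auto
    show ?thesis unfolding D1_def D2_def h using ne
      by (simp add: divide_simps) (simp add: algebra_simps power2_eq_square)
  qed
  have PL: "- (P*La*Lb) = A * B * (a - b) * (4*a*b/(a\<^sup>2 - b\<^sup>2)\<^sup>2)"
    unfolding P_def La_def Lb_def D[symmetric] by (simp add: algebra_simps)
  have "C * (U - 1) + V * Lb * Pa + (((Pb * V + W * Lb * P) * La) + Lab * (P * V)) =
        n * (1 + n) * pa * pb * (a - b) * (U - 1) +
        4 * a * b * (A * B * (a - b)) * Lj / ((a\<^sup>2 - b\<^sup>2)\<^sup>2 * fj)"
    unfolding LHS unfolding Z unfolding C using PL f by (simp add: field_simps)
  then show ?thesis unfolding C_def Pa_def Pb_def P_def La_def Lb_def Lab_def D1_def D2_def q1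
    by (simp add: algebra_simps)
qed

lemma pow_sub: "real N * (x::real)^N = real N * x^(N - Suc 0) * x"
  by (cases N) auto

lemma Tp_Suc[simp]: "Tp (Suc j) x = T j x" by (simp add: Tp_def)

definition LL :: "real \<Rightarrow> real \<Rightarrow> real" where "LL a b = ln (a+b) - ln (a-b)"
definition S0 :: "nat \<Rightarrow> nat \<Rightarrow> real \<Rightarrow> real \<Rightarrow> real" where
  "S0 N K a b = a^N*b^N*(a-b)*(T K (LL a b) - 1)"
definition H0 :: "nat \<Rightarrow> nat \<Rightarrow> real \<Rightarrow> real \<Rightarrow> real" where
  "H0 N K a b = (real N * a^(N-1)*b^N*(a-b) + a^N*b^N)*(T K (LL a b) - 1)
      + a^N*b^N*(a-b)*Tp K (LL a b)*(1/(a+b) - 1/(a-b))"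

lemma S0_da:
  assumes "b < a" "0 < a + b"
  shows "((\<lambda>a. S0 N K a b) has_real_derivative H0 N K a b) (at a)"
  unfolding S0_def H0_def LL_def using assms
  apply (auto intro!: derivative_eq_intros)
  done

lemma H0_db:
  assumes "b < a" "0 < a + b"
  shows "((\<lambda>b. H0 N (Suc j) a b) has_real_derivative
     real N * real (N+1) * a^(N-1)*b^(N-1)*(a-b)*(T (Suc j) (LL a b) - 1)
     + 4*a*b/(a^2-b^2)^2 * (a^N*b^N*(a-b)) * LL a b^j/fact j) (at b)"
  unfolding H0_def LL_def using assms
  apply (auto intro!: derivative_eq_intros)
  apply (rule alg)
  using T_split[of j "ln (a + b) - ln (a - b)"] by (auto simp: pow_sub)

lemma T_le_exp: "(y::real) \<ge> 0 \<Longrightarrow> T K y \<le> exp y"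
proof -
  assume y: "y \<ge> 0"
  have "T K y = (\<Sum>i\<in>{..K}. y^i /\<^sub>R fact i)" by (simp add: T_def divide_inverse_commute)
  also have "\<dots> \<le> (\<Sum>i. y^i /\<^sub>R fact i)"
    by (rule sum_le_suminf) (use y exp_converges[of y] in \<open>auto simp: sums_iff\<close>)
  also have "\<dots> = exp y" using exp_converges[of y] by (simp add: sums_iff)
  finally show ?thesis .
qed

lemma T_bound: "(x::real) \<ge> 0 \<Longrightarrow> T K x \<le> 2^K * exp (x/2)"
proof -
  assume x: "x \<ge> 0"
  have "T K x = (\<Sum>i\<le>K. 2^i * ((x/2)^i / fact i))" unfolding T_def
    by (rule sum.cong) (auto simp: power_divide)
  also have "\<dots> \<le> (\<Sum>i\<le>K. 2^K * ((x/2)^i / fact i))"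
  proof (rule sum_mono)
    fix i assume "i \<in> {..K}"
    then have "2^i \<le> (2::real)^K" by (intro power_increasing) auto
    then show "2^i * ((x/2)^i / fact i) \<le> 2^K * ((x/2)^i / fact i)"
      using x by (intro mult_right_mono) auto
  qed
  also have "\<dots> = 2^K * T K (x/2)" by (simp add: T_def sum_distrib_left)
  also have "\<dots> \<le> 2^K * exp (x/2)" using T_le_exp[of "x/2" K] x by simp
  finally show ?thesis .
qed

lemma LL_nonneg: "0 \<le> b \<Longrightarrow> b < a \<Longrightarrow> 0 \<le> LL a b"
  unfolding LL_def by simp

lemma main_bound:
  assumes "0 \<le> b" "b < a"
  shows "0 \<le> (a-b)*(T K (LL a b) - 1)" "(a-b)*(T K (LL a b) - 1) \<le> 2^K * sqrt ((a-b)*(a+b))"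
proof -
  have L: "0 \<le> LL a b" using assms by (rule LL_nonneg)
  show "0 \<le> (a-b)*(T K (LL a b) - 1)" using T_ge1[OF L, of K] assms by simp
  have e: "exp (LL a b / 2) = sqrt ((a+b)/(a-b))"
  proof -
    have "exp (LL a b / 2) = ((a+b)/(a-b)) powr (1/2)"
      using assms by (simp add: powr_def LL_def ln_div)
    then show ?thesis using assms by (simp add: powr_half_sqrt)
  qed
  have s: "(a-b) * sqrt ((a+b)/(a-b)) = sqrt ((a-b)*(a+b))"
  proof -
    have "(a-b) = sqrt ((a-b)^2)" using assms by simp
    then have "(a-b) * sqrt ((a+b)/(a-b)) = sqrt ((a-b)^2 * ((a+b)/(a-b)))"
      by (metis real_sqrt_mult)
    also have "(a-b)^2 * ((a+b)/(a-b)) = (a-b)*(a+b)" using assms by (simp add: power2_eq_square)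
    finally show ?thesis .
  qed
  have "(a-b)*(T K (LL a b) - 1) \<le> (a-b) * (2^K * exp (LL a b / 2))"
    using T_bound[OF L, of K] assms by (intro mult_left_mono) auto
  also have "\<dots> = 2^K * sqrt ((a-b)*(a+b))" unfolding e by (metis s mult.left_commute)
  finally show "(a-b)*(T K (LL a b) - 1) \<le> 2^K * sqrt ((a-b)*(a+b))" .
qed

definition cc :: "real \<Rightarrow> nat \<Rightarrow> real" where "cc lam N = lam^(N+1) / (fact N * fact (N+1))"

lemma F_formula:
  assumes "n \<ge> 0" "i \<ge> 0" "0 \<le> b" "b < a"
  shows "F lam n i a b = cc lam (nat n) * (a^nat n * b^nat n * (a-b) * (LL a b)^nat i / fact (nat i))"
  using assms by (simp add: F_def cc_def LL_def ln_div)

lemma sum_int_nat: "(\<Sum>i=1..(k::int). f i) = (\<Sum>i=1..nat k. f (int i))"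
proof -
  have "{1..k} = int ` {1..nat k}"
  proof
    show "{1..k} \<subseteq> int ` {1..nat k}"
    proof
      fix x assume "x \<in> {1..k}"
      then have "x = int (nat x)" "nat x \<in> {1..nat k}" by auto
      then show "x \<in> int ` {1..nat k}" by blast
    qed
  qed auto
  then show ?thesis by (simp add: sum.reindex)
qed

lemma Fsum:
  assumes "n \<ge> 0" "k \<ge> 1" "0 \<le> b" "b < a"
  shows "(\<Sum>i=1..k. F lam n i a b) = cc lam (nat n) * S0 (nat n) (nat k) a b"
proof -
  have "(\<Sum>i=1..k. F lam n i a b) = (\<Sum>i=1..nat k. cc lam (nat n) * (a^nat n * b^nat n * (a-b) * (LL a b)^i / fact i))"
    unfolding sum_int_nat using assms by (intro sum.cong) (auto simp: F_formula)
  also have "\<dots> = cc lam (nat n) * (a^nat n * b^nat n * (a-b)) * (\<Sum>i=1..nat k. (LL a b)^i / fact i)"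
    unfolding sum_distrib_left by (rule sum.cong) simp_all
  also have "\<dots> = cc lam (nat n) * S0 (nat n) (nat k) a b"
    unfolding S0_def T_sum1[symmetric] by (simp only: mult.assoc)
  finally show ?thesis .
qed

lemma Fsum_out:
  assumes "n \<ge> 0" "\<not> (0 \<le> b \<and> b < a)"
  shows "(\<Sum>i=1..k. F lam n i a b) = 0"
  using assms by (intro sum.neutral) (auto simp: F_def)

lemma Fsum_neg:
  assumes "n < 0"
  shows "(\<Sum>i=1..k. F lam n i a b) = 0"
  using assms by (intro sum.neutral) (auto simp: F_def)

definition Gt :: "nat \<Rightarrow> nat \<Rightarrow> real \<Rightarrow> real \<Rightarrow> real" where
  "Gt N j a b = real N * real (N+1) * a^(N-1)*b^(N-1)*(a-b)*(T (Suc j) (LL a b) - 1)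
     + 4*a*b/(a^2-b^2)^2 * (a^N*b^N*(a-b)) * LL a b^j/fact j"

lemma cc_rel: "lam * cc lam M = cc lam (Suc M) * (real (Suc M) * real (Suc M + 1))"
proof -
  define f :: real where "f = fact M"
  define m :: real where "m = real M"
  have h: "m + 1 > 0" "m + 2 > 0" "f > 0" by (auto simp: f_def m_def)
  have e1: "cc lam M = lam^(M+1)/(f*((m+1)*f))" by (simp add: cc_def f_def m_def fact_Suc algebra_simps)
  have e2: "cc lam (Suc M) = lam^(M+1)*lam/(((m+1)*f)*((m+2)*((m+1)*f)))"
    by (simp add: cc_def f_def m_def fact_Suc algebra_simps)
  have e3: "real (Suc M) * real (Suc M + 1) = (m+1)*(m+2)" by (simp add: m_def algebra_simps)
  have e4: "((m+1)*f)*((m+2)*((m+1)*f)) = ((m+1)*(m+2)) * (f*((m+1)*f))" by (simp add: algebra_simps)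
  have c: "(m+1)*(m+2) \<noteq> 0" using h by auto
  have gen: "\<And>X Y c. c \<noteq> 0 \<Longrightarrow> X/(c*Y)*c = X/(Y::real)" by simp
  show ?thesis unfolding e1 e2 e3 e4 gen[OF c] by (simp add: algebra_simps)
qed

lemma G_eq:
  assumes "n \<ge> 0" "k \<ge> 1" "0 \<le> b" "b < a" "nat k = Suc j"
  shows "cc lam (nat n) * Gt (nat n) j a b =
     lam * (\<Sum>i=1..k. F lam (n-1) i a b) + 4 * (a*b/(a^2-b^2)^2 * F lam n (k-1) a b)"
proof -
  have B: "F lam n (k-1) a b = cc lam (nat n) * (a^nat n * b^nat n * (a-b) * (LL a b)^j / fact j)"
    using assms F_formula[of n "k-1" b a lam] by (simp add: nat_diff_distrib)
  have A: "lam * (\<Sum>i=1..k. F lam (n-1) i a b) = cc lam (nat n) *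
      (real (nat n) * real (nat n+1) * a^(nat n-1)*b^(nat n-1)*(a-b)*(T (Suc j) (LL a b) - 1))"
  proof (cases "n = 0")
    case True
    then show ?thesis using Fsum_neg[of "n-1"] by simp
  next
    case False
    then obtain M where M: "nat n = Suc M" using assms by (metis gr0_implies_Suc nat_0_iff not_less zero_less_nat_eq antisym_conv2)
    have "nat (n-1) = M" using M by linarith
    then have "(\<Sum>i=1..k. F lam (n-1) i a b) = cc lam M * S0 M (Suc j) a b"
      using Fsum[of "n-1" k b a lam] assms False by simp
    then have "lam * (\<Sum>i=1..k. F lam (n-1) i a b) = (lam * cc lam M) * S0 M (Suc j) a b" by simp
    also have "\<dots> = cc lam (Suc M) * (real (Suc M) * real (Suc M + 1)) * S0 M (Suc j) a b"
      by (simp only: cc_rel)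
    finally show ?thesis unfolding M S0_def by simp

  qed
  have D: "(a^2-b^2)^2 \<noteq> 0"
  proof -
    have "b^2 < a^2" using assms by (intro power_strict_mono) auto
    then show ?thesis by simp
  qed
  show ?thesis unfolding A B Gt_def using D by (simp add: field_simps)
qed

lemma H0_db':
  assumes "b < a" "0 < a + b"
  shows "((\<lambda>b. H0 N (Suc j) a b) has_real_derivative Gt N j a b) (at b)"
  using H0_db[OF assms] unfolding Gt_def by simp

lemma T_zero[simp]: "T K 0 = 1"
  by (induct K) (auto simp: T_def)

lemma H0_zero: "0 < a \<Longrightarrow> H0 N K a 0 = 0"
  by (simp add: H0_def LL_def)

lemma S0_zero: "0 < a \<Longrightarrow> S0 N K a 0 = 0"
  by (simp add: S0_def LL_def)

lemma T_cont[continuous_intros]: "continuous_on s f \<Longrightarrow> continuous_on s (\<lambda>x. T m (f x))"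
proof -
  assume f: "continuous_on s f"
  have "continuous_on UNIV (T m)"
    using T_deriv DERIV_isCont continuous_at_imp_continuous_on by blast
  then show ?thesis using continuous_on_compose2[OF _ f] by blast
qed

lemma cc_nonneg: "lam \<ge> 0 \<Longrightarrow> cc lam N \<ge> 0"
  by (simp add: cc_def)


lemma S0_bound:
  assumes "0 \<le> t" "t < x" "x \<le> \<alpha>" "0 \<le> C"
  shows "0 \<le> C * S0 M K x t" "C * S0 M K x t \<le> C * (\<alpha>^M * \<alpha>^M * (2^K * (2*\<alpha>)))"
proof -
  have mb: "0 \<le> (x-t)*(T K (LL x t) - 1)" "(x-t)*(T K (LL x t) - 1) \<le> 2^K * sqrt ((x-t)*(x+t))"
    using main_bound[of t x K] assms by auto
  have e: "C * S0 M K x t = C * (x^M * t^M * ((x-t)*(T K (LL x t) - 1)))"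
    unfolding S0_def by (simp add: algebra_simps)
  show "0 \<le> C * S0 M K x t" unfolding e using mb assms by simp
  have sq: "sqrt ((x-t)*(x+t)) \<le> 2*\<alpha>"
  proof -
    have "(x-t)*(x+t) \<le> (2*\<alpha>)*(2*\<alpha>)" using assms by (intro mult_mono) auto
    then have "sqrt ((x-t)*(x+t)) \<le> sqrt ((2*\<alpha>)^2)" by (simp add: power2_eq_square)
    also have "\<dots> = 2*\<alpha>" by (rule real_sqrt_unique) (use assms in auto)
    finally show ?thesis .
  qed
  have p1: "x^M * t^M \<le> \<alpha>^M * \<alpha>^M" using assms by (intro mult_mono power_mono) auto
  have p2: "(x-t)*(T K (LL x t) - 1) \<le> 2^K * (2*\<alpha>)"
    using mb(2) sq by (smt (verit) mult_left_mono zero_le_power)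
  have "x^M * t^M * ((x-t)*(T K (LL x t) - 1)) \<le> \<alpha>^M * \<alpha>^M * (2^K * (2*\<alpha>))"
    by (rule mult_mono[OF p1 p2]) (use mb assms in auto)
  then show "C * S0 M K x t \<le> C * (\<alpha>^M * \<alpha>^M * (2^K * (2*\<alpha>)))"
    unfolding e using assms by (intro mult_left_mono) auto
qed

lemma Ioc_to_Icc:
  fixes f :: "real \<Rightarrow> real"
  assumes "f integrable_on {a<..b}"
  shows "f integrable_on {a..b}"
proof (rule integrable_spike_set[OF assms])
  have "{x \<in> {a<..b} - {a..b}. f x \<noteq> 0} = {}" by auto
  then show "negligible {x \<in> {a<..b} - {a..b}. f x \<noteq> 0}" by (metis negligible_empty)
  have "{x \<in> {a..b} - {a<..b}. f x \<noteq> 0} \<subseteq> {a}" by auto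
  then show "negligible {x \<in> {a..b} - {a<..b}. f x \<noteq> 0}" by (rule negligible_subset[rotated]) auto
qed

lemma Icc_to_Ioc:
  fixes f :: "real \<Rightarrow> real"
  assumes "f integrable_on {a..b}"
  shows "f integrable_on {a<..b}"
proof (rule integrable_spike_set[OF assms])
  have "{x \<in> {a<..b} - {a..b}. f x \<noteq> 0} = {}" by auto
  then show "negligible {x \<in> {a<..b} - {a..b}. f x \<noteq> 0}" by (metis negligible_empty)
  have "{x \<in> {a..b} - {a<..b}. f x \<noteq> 0} \<subseteq> {a}" by auto
  then show "negligible {x \<in> {a..b} - {a<..b}. f x \<noteq> 0}" by (rule negligible_subset[rotated]) auto
qed

theorem lemma2:
  fixes lam \<alpha> \<beta> :: real and n k :: int
  assumes "lam \<ge> 0" and "n \<ge> 0" and "k \<ge> 1" and "0 \<le> \<beta>" and "\<beta> \<le> \<alpha>"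
  shows "(\<Sum>i=1..k. F lam n i \<alpha> \<beta>) =
     integral {\<beta>..\<alpha>} (\<lambda>\<eta>. integral {0..\<beta>} (\<lambda>\<sigma>. lam * (\<Sum>i=1..k. F lam (n - 1) i \<eta> \<sigma>)))
   + 4 * integral {\<beta>..\<alpha>} (\<lambda>\<eta>. integral {0..\<beta>}
        (\<lambda>\<sigma>. \<eta> * \<sigma> / (\<eta>\<^sup>2 - \<sigma>\<^sup>2)\<^sup>2 * F lam n (k - 1) \<eta> \<sigma>))"
proof -
  define N where "N = nat n"
  obtain j where j: "nat k = Suc j" using assms(3) by (cases "nat k") auto
  define c where "c = cc lam N"
  have c0: "c \<ge> 0" unfolding c_def using assms(1) by (rule cc_nonneg)
  define Sf where "Sf = (\<lambda>\<eta>. \<Sum>i=1..k. F lam n i \<eta> \<beta>)"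
  define gA where "gA = (\<lambda>\<eta> \<sigma>. lam * (\<Sum>i=1..k. F lam (n-1) i \<eta> \<sigma>))"
  define gB where "gB = (\<lambda>\<eta> \<sigma>::real. \<eta> * \<sigma> / (\<eta>\<^sup>2 - \<sigma>\<^sup>2)\<^sup>2 * F lam n (k-1) \<eta> \<sigma>)"
  define IA where "IA = (\<lambda>\<eta>. integral {0..\<beta>} (gA \<eta>))"
  define IB where "IB = (\<lambda>\<eta>. integral {0..\<beta>} (gB \<eta>))"
  have Sf_eq: "Sf x = c * S0 N (Suc j) x \<beta>" if "\<beta> < x" for x
    unfolding Sf_def c_def N_def j[symmetric] using that assms by (intro Fsum) auto
  have Sf_b: "Sf \<beta> = 0" unfolding Sf_def using assms by (intro Fsum_out) auto
  have goal_eq: "?thesis \<longleftrightarrow> Sf \<alpha> = integral {\<beta>..\<alpha>} IA + 4 * integral {\<beta>..\<alpha>} IB"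
    unfolding Sf_def IA_def IB_def gA_def gB_def by simp
  show ?thesis
  proof (cases "\<beta> = \<alpha>")
    case True
    then show ?thesis unfolding goal_eq using Sf_b by simp
  next
    case False
    then have ba: "\<beta> < \<alpha>" using assms by simp
    have deriv: "(Sf has_real_derivative c * H0 N (Suc j) x \<beta>) (at x)" if "\<beta> < x" for x
    proof -
      have ev: "eventually (\<lambda>y. Sf y = c * S0 N (Suc j) y \<beta>) (nhds x)"
        using eventually_nhds_in_open[of "{\<beta><..}" x] that
        by (auto elim!: eventually_mono intro: Sf_eq)
      have "((\<lambda>y. c * S0 N (Suc j) y \<beta>) has_real_derivative c * H0 N (Suc j) x \<beta>) (at x)"
        using S0_da[of \<beta> x N "Suc j"] that assms by (auto intro: DERIV_cmult)
      then show ?thesis using DERIV_cong_ev[OF refl ev refl] by simp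
    qed
    have gAeq: "gA x t = (if n = 0 then 0 else lam * cc lam (N-1) * S0 (N-1) (Suc j) x t)"
      if "0 \<le> t" "t < x" for x t
    proof (cases "n = 0")
      case True then show ?thesis unfolding gA_def by (simp add: Fsum_neg)
    next
      case False
      have "nat (n-1) = N - 1" unfolding N_def by simp
      then show ?thesis unfolding gA_def using False that assms Fsum[of "n-1" k t x lam] j by simp
    qed
    have gAint: "gA x integrable_on {0..\<beta>}" if "\<beta> < x" for x
    proof -
      have "continuous_on {0..\<beta>} (\<lambda>t. (if n = 0 then 0 else lam * cc lam (N-1) * S0 (N-1) (Suc j) x t))"
        unfolding S0_def LL_def using that assms(4) by (cases "n = 0") (auto intro!: continuous_intros)
      then have "continuous_on {0..\<beta>} (gA x)"
        by (rule continuous_on_eq) (use that in \<open>auto simp: gAeq\<close>)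
      then show ?thesis by (rule integrable_continuous_interval)
    qed
    have inner: "IA x + 4 * IB x = c * H0 N (Suc j) x \<beta>" if x: "\<beta> < x" for x
    proof -
      have hi: "((\<lambda>t. gA x t + 4 * gB x t) has_integral c * H0 N (Suc j) x \<beta> - c * H0 N (Suc j) x 0) {0..\<beta>}"
      proof (rule fundamental_theorem_of_calculus)
        show "0 \<le> \<beta>" by (rule assms)
        fix t assume t: "t \<in> {0..\<beta>}"
        have "((\<lambda>t. c * H0 N (Suc j) x t) has_real_derivative c * Gt N j x t) (at t)"
          using H0_db'[of t x N j] t x by (auto intro: DERIV_cmult)
        moreover have "c * Gt N j x t = gA x t + 4 * gB x t"
          unfolding c_def N_def gA_def gB_def using G_eq[of n k t x j lam] t x assms j by auto
        ultimately show "((\<lambda>t. c * H0 N (Suc j) x t) has_vector_derivative gA x t + 4 * gB x t) (at t within {0..\<beta>})"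
          by (simp add: has_real_derivative_iff_has_vector_derivative has_vector_derivative_at_within)
      qed
      have h0: "H0 N (Suc j) x 0 = 0" using x assms by (intro H0_zero) auto
      have iA: "gA x integrable_on {0..\<beta>}" using x by (rule gAint)
      have "(\<lambda>t. ((gA x t + 4 * gB x t) - gA x t) / 4) integrable_on {0..\<beta>}"
        using hi iA by (intro integrable_on_divide integrable_diff) auto
      then have iB: "gB x integrable_on {0..\<beta>}" by simp
      have "integral {0..\<beta>} (\<lambda>t. gA x t + 4 * gB x t) = IA x + 4 * IB x"
        unfolding IA_def IB_def using iA iB by (simp add: integral_add integrable_on_cmult_right)
      then show ?thesis using hi h0 by (simp add: integral_unique)
    qed
    have cont: "continuous_on {\<beta>..\<alpha>} Sf"
    proof (rule continuous_on_IccI)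
      show "(Sf \<longlongrightarrow> Sf \<beta>) (at_right \<beta>)"
      proof -
        define u where "u = (\<lambda>x. c*(x^N*\<beta>^N)*(2^Suc j * sqrt((x-\<beta>)*(x+\<beta>))))"
        have ul: "(u \<longlongrightarrow> 0) (at_right \<beta>)"
        proof -
          have "(u \<longlongrightarrow> c*(\<beta>^N*\<beta>^N)*(2^Suc j * sqrt((\<beta>-\<beta>)*(\<beta>+\<beta>)))) (at_right \<beta>)"
            unfolding u_def by (intro tendsto_intros)
          then show ?thesis by simp
        qed
        have pt: "0 \<le> Sf x \<and> Sf x \<le> u x" if "\<beta> < x" for x
        proof -
          have mb: "0 \<le> (x-\<beta>)*(T (Suc j) (LL x \<beta>) - 1)" "(x-\<beta>)*(T (Suc j) (LL x \<beta>) - 1) \<le> 2^Suc j * sqrt ((x-\<beta>)*(x+\<beta>))"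
            using main_bound[of \<beta> x "Suc j"] that assms by auto
          have e: "Sf x = c*(x^N*\<beta>^N)*((x-\<beta>)*(T (Suc j) (LL x \<beta>) - 1))"
            unfolding Sf_eq[OF that] S0_def by (simp add: algebra_simps)
          have cx: "0 \<le> c*(x^N*\<beta>^N)" using c0 that assms by simp
          show ?thesis unfolding e u_def using mb cx by (auto intro: mult_left_mono)
        qed
        have ev1: "eventually (\<lambda>x. 0 \<le> Sf x) (at_right \<beta>)"
          using eventually_at_right_less[of \<beta>] by eventually_elim (use pt in blast)
        have ev2: "eventually (\<lambda>x. Sf x \<le> u x) (at_right \<beta>)"
          using eventually_at_right_less[of \<beta>] by eventually_elim (use pt in blast)
        show ?thesis unfolding Sf_b by (rule tendsto_sandwich[OF ev1 ev2 tendsto_const ul])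
      qed
      have ic: "isCont Sf x" if "\<beta> < x" for x using deriv[OF that] by (rule DERIV_isCont)
      show "(Sf \<longlongrightarrow> Sf \<alpha>) (at_left \<alpha>)"
        using ic[OF ba] by (simp add: isCont_def filterlim_at_split)
      show "Sf \<midarrow>x\<rightarrow> Sf x" if "\<beta> < x" "x < \<alpha>" for x
        using ic[OF that(1)] by (simp add: isCont_def)
      show "\<beta> < \<alpha>" by (rule ba)
    qed
    have IAint: "IA integrable_on {\<beta>..\<alpha>}"
    proof (cases "n = 0")
      case True
      then have "IA = (\<lambda>_. 0)" unfolding IA_def gA_def by (simp add: Fsum_neg)
      then show ?thesis using integrable_0 by metis
    next
      case False
      define M where "M = N - 1"
      define C where "C = lam * cc lam M"
      have C0: "0 \<le> C" unfolding C_def using assms(1) cc_nonneg[OF assms(1)] by simp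
      define gf where "gf = (\<lambda>x t. C * S0 M (Suc j) x t)"
      have gAf: "gA x t = gf x t" if "0 \<le> t" "t < x" for x t
        using gAeq[OF that] False unfolding gf_def C_def M_def by simp
      have IAf: "IA x = integral {0..\<beta>} (gf x)" if "\<beta> < x" for x
        unfolding IA_def using that by (intro integral_cong gAf) auto
      have contp: "continuous_on ({\<beta><..\<alpha>} \<times> cbox 0 \<beta>) (\<lambda>(x, t). gf x t)"
      proof -
        have "continuous_on ({\<beta><..\<alpha>} \<times> cbox 0 \<beta>) (\<lambda>p. gf (fst p) (snd p))"
          unfolding gf_def S0_def LL_def using assms(4)
          by (auto intro!: continuous_intros simp: cbox_interval)
        then show ?thesis by (simp add: case_prod_beta)
      qed
      have contIA: "continuous_on {\<beta><..\<alpha>} IA"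
      proof -
        have "continuous_on {\<beta><..\<alpha>} (\<lambda>x. integral (cbox 0 \<beta>) (gf x))"
          by (rule integral_continuous_on_param[OF contp])
        then show ?thesis by (rule continuous_on_eq) (auto simp: IAf cbox_interval)
      qed
      define B where "B = \<beta> * (C * (\<alpha>^M * \<alpha>^M * (2^Suc j * (2*\<alpha>))))"
      have bnd: "\<bar>IA x\<bar> \<le> B" if x: "x \<in> {\<beta><..\<alpha>}" for x
      proof -
        have xb: "\<beta> < x" "x \<le> \<alpha>" using x by auto
        have pt: "0 \<le> gA x t \<and> gA x t \<le> C * (\<alpha>^M * \<alpha>^M * (2^Suc j * (2*\<alpha>)))" if "t \<in> {0..\<beta>}" for t
          using S0_bound[of t x \<alpha> C M "Suc j"] that xb C0 gAf[of t x] unfolding gf_def by auto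
        have i1: "gA x integrable_on {0..\<beta>}" using gAint xb by auto
        have "0 \<le> IA x" unfolding IA_def using i1 pt by (intro integral_nonneg) auto
        moreover have "IA x \<le> integral {0..\<beta>} (\<lambda>_. C * (\<alpha>^M * \<alpha>^M * (2^Suc j * (2*\<alpha>))))"
          unfolding IA_def using i1 pt by (intro integral_le) auto
        moreover have "integral {0..\<beta>} (\<lambda>_. C * (\<alpha>^M * \<alpha>^M * (2^Suc j * (2*\<alpha>)))) = B"
          using assms(4) unfolding B_def by (simp add: mult_ac)
        ultimately show ?thesis by simp
      qed
      have meas: "IA \<in> borel_measurable (lebesgue_on {\<beta><..\<alpha>})"
        by (rule continuous_imp_measurable_on_sets_lebesgue[OF contIA]) simp
      have "IA integrable_on {\<beta><..\<alpha>}"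
        by (rule measurable_bounded_by_integrable_imp_integrable_real[OF meas _ bnd])
           (auto intro: Icc_to_Ioc)
      then show ?thesis by (rule Ioc_to_Icc)
    qed
    have ftc: "((\<lambda>x. IA x + 4 * IB x) has_integral Sf \<alpha>) {\<beta>..\<alpha>}"
    proof -
      have "((\<lambda>x. IA x + 4 * IB x) has_integral Sf \<alpha> - Sf \<beta>) {\<beta>..\<alpha>}"
      proof (rule fundamental_theorem_of_calculus_interior)
        show "\<beta> \<le> \<alpha>" by (rule assms)
        show "continuous_on {\<beta>..\<alpha>} Sf" by (rule cont)
        fix x assume "x \<in> {\<beta><..<\<alpha>}"
        then show "(Sf has_vector_derivative IA x + 4 * IB x) (at x)"
          using deriv[of x] inner[of x] by (simp add: has_real_derivative_iff_has_vector_derivative)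
      qed
      then show ?thesis using Sf_b by simp
    qed
    have IBint: "IB integrable_on {\<beta>..\<alpha>}"
    proof -
      have "(\<lambda>x. ((IA x + 4 * IB x) - IA x) / 4) integrable_on {\<beta>..\<alpha>}"
        using ftc IAint by (intro integrable_on_divide integrable_diff) auto
      then show ?thesis by simp
    qed
    have "integral {\<beta>..\<alpha>} (\<lambda>x. IA x + 4 * IB x) = integral {\<beta>..\<alpha>} IA + 4 * integral {\<beta>..\<alpha>} IB"
      using IAint IBint by (simp add: integral_add integrable_on_cmult_right)
    then show ?thesis unfolding goal_eq using ftc by (simp add: integral_unique)
  qed
qed


end
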